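(* Let $k\ge 2$ be a natural number. (i) Let $f(t)=t^k+at^{k-1}-b$ with $a,b\in\mathbb{Z}$ and $b\ne 0$. Then $f$ admits polysmoothness $\phi(k-1)/(k-1)$. (ii) Let $f(t)=at^k-t+b$ with $a,b\in\mathbb{Z}$ and $ab\ne 0$. Then $f$ admits polysmoothness $\phi(k)/k$.
   Context: $\phi$ denotes Euler's totient function. A polynomial $f\in\mathbb{Z}[t]$ of positive degree admits polysmoothness $\theta$ (for a real $\theta\ge 0$) if there exists a non-constant polynomial $g\in\mathbb{Z}[t]$ such that every irreducible factor of $f(g(t))$ has degree at most $\theta\,(\deg f)(\deg g)$. *)

theory Defs
  imports "HOL-Computational_Algebra.Computational_Algebra" "HOL-Number_Theory.Number_Theory"
begin

definition admits_polysmoothness :: "int poly \<Rightarrow> real \<Rightarrow> bool" where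
  "admits_polysmoothness f \<theta> \<longleftrightarrow> degree f > 0 \<and>
     (\<exists>g :: int poly. degree g > 0 \<and>
        (\<forall>q :: int poly. irreducible q \<and> q dvd pcompose f g \<longrightarrow>
           real (degree q) \<le> \<theta> * real (degree f) * real (degree g)))"

end

theory Submission imports Defs begin


lemma map_poly_of_int_mult:
  "map_poly (of_int :: int \<Rightarrow> 'a::comm_ring_1) (p * q) = map_poly of_int p * map_poly of_int q"
  by (rule poly_eqI) (simp add: coeff_map_poly coeff_mult)

lemma map_poly_of_int_prod:
  "map_poly (of_int :: int \<Rightarrow> 'a::comm_ring_1) (prod f A) = (\<Prod>x\<in>A. map_poly of_int (f x))"
  by (induction A rule: infinite_finite_induct) (auto simp: map_poly_of_int_mult)

lemma map_poly_of_int_diff: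
  "map_poly (of_int :: int \<Rightarrow> 'a::comm_ring_1) (p - q) = map_poly of_int p - map_poly of_int q"
  by (rule poly_eqI) (simp add: coeff_map_poly)

lemma map_poly_of_int_add:
  "map_poly (of_int :: int \<Rightarrow> 'a::comm_ring_1) (p + q) = map_poly of_int p + map_poly of_int q"
  by (rule poly_eqI) (simp add: coeff_map_poly)

lemma map_poly_of_int_eq_iff:
  "map_poly (of_int :: int \<Rightarrow> 'a::ring_char_0) p = map_poly of_int q \<longleftrightarrow> p = q"
  by (auto simp: poly_eq_iff coeff_map_poly)

lemma degree_map_poly_of_int:
  "degree (map_poly (of_int :: int \<Rightarrow> 'a::ring_char_0) p) = degree p"
  by (rule degree_map_poly) simp

lemma map_poly_of_int_monom:
  "map_poly (of_int :: int \<Rightarrow> 'a::comm_ring_1) (Polynomial.monom c n) = Polynomial.monom (of_int c) n"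
  by (simp add: map_poly_monom)

lemma int_quotient:
  fixes A G :: "int poly" and C :: "complex poly"
  assumes G: "lead_coeff G = 1" and eq: "map_poly of_int A = C * map_poly of_int G"
  shows "\<exists>F. map_poly of_int F = C"
proof -
  have G0: "G \<noteq> 0" using G by auto
  obtain q r where qr: "pseudo_divmod A G = (q, r)" by (cases "pseudo_divmod A G") auto
  from pseudo_divmod[OF G0 qr] G have A: "A = G * q + r" and r: "r = 0 \<or> degree r < degree G"
    by auto
  have "map_poly of_int G * (C - map_poly of_int q) = (map_poly of_int r :: complex poly)"
    using eq unfolding A by (simp add: map_poly_of_int_add map_poly_of_int_mult algebra_simps)
  moreover have "C = map_poly of_int q"
  proof (rule ccontr)
    assume ne: "C \<noteq> map_poly of_int q"
    have G0': "map_poly of_int G \<noteq> (0::complex poly)" using G0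
      by (metis map_poly_0 map_poly_of_int_eq_iff)
    have "degree (map_poly of_int G * (C - map_poly of_int q)) \<ge> degree G"
      using ne G0' by (subst degree_mult_eq) (auto simp: degree_map_poly_of_int)
    moreover have "map_poly of_int G * (C - map_poly of_int q) \<noteq> 0" using ne G0' by auto
    ultimately show False using r \<open>map_poly of_int G * (C - map_poly of_int q) = map_poly of_int r\<close>
      by (auto simp: degree_map_poly_of_int)
  qed
  thus ?thesis by blast
qed

definition prim :: "nat \<Rightarrow> complex set" where
  "prim d = {z. 0 < d \<and> z ^ d = 1 \<and> (\<forall>e. 0 < e \<and> e < d \<longrightarrow> z ^ e \<noteq> 1)}"

definition cyc :: "nat \<Rightarrow> complex poly" where
  "cyc d = (\<Prod>z\<in>prim d. [:-z, 1:])"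

lemma finite_prim: "finite (prim d)"
proof (cases "d > 0")
  case True
  have "prim d \<subseteq> {z. z ^ d = 1}" by (auto simp: prim_def)
  thus ?thesis using finite_nth_roots[OF True] finite_subset by blast
qed (auto simp: prim_def)

lemma prim_disjoint: "d \<noteq> d' \<Longrightarrow> prim d \<inter> prim d' = {}"
proof (rule ccontr)
  assume "d \<noteq> d'" "prim d \<inter> prim d' \<noteq> {}"
  then obtain z where z: "z \<in> prim d" "z \<in> prim d'" by blast
  show False
  proof (cases "d < d'")
    case True thus False using z unfolding prim_def by blast
  next
    case False hence "d' < d" using \<open>d \<noteq> d'\<close> by linarith
    thus False using z unfolding prim_def by blast
  qed
qed



lemma roots_union:
  assumes n: "n > 0"
  shows "{z::complex. z ^ n = 1} = (\<Union>d\<in>{d. d dvd n}. prim d)"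
proof safe
  fix z :: complex assume z: "z ^ n = 1"
  define d where "d = (LEAST e. 0 < e \<and> z ^ e = 1)"
  have ex: "0 < n \<and> z ^ n = 1" using n z by blast
  have d: "0 < d \<and> z ^ d = 1" unfolding d_def by (rule LeastI[of _ n], rule ex)
  have min: "\<And>e. 0 < e \<Longrightarrow> e < d \<Longrightarrow> z ^ e \<noteq> 1"
    unfolding d_def using not_less_Least by blast
  have "z ^ n = (z ^ d) ^ (n div d) * z ^ (n mod d)"
    by (simp only: power_add [symmetric] power_mult [symmetric] mult_div_mod_eq)
  hence zm: "z ^ (n mod d) = 1" using z d by simp
  have "n mod d < d" using d by simp
  hence "n mod d = 0" using min[of "n mod d"] zm by linarith
  hence "d dvd n" by (simp add: dvd_eq_mod_eq_0)
  moreover have "z \<in> prim d" using d min by (auto simp: prim_def)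
  ultimately show "z \<in> (\<Union>d\<in>{d. d dvd n}. prim d)" by blast
next
  fix z d assume "d dvd n" "z \<in> prim d"
  then obtain m where "n = d * m" by auto
  with \<open>z \<in> prim d\<close> show "z ^ n = 1" by (simp add: prim_def power_mult)
qed

lemma xn_decomp:
  assumes n: "n > 0"
  shows "Polynomial.monom 1 n - 1 = (\<Prod>z\<in>{z::complex. z ^ n = 1}. [:-z, 1:])"
proof -
  define p :: "complex poly" where "p = Polynomial.monom 1 n - 1"
  have dp: "degree p = n"
  proof (rule antisym)
    show "degree p \<le> n" by (rule degree_le) (auto simp: p_def coeff_monom)
    show "n \<le> degree p" by (rule le_degree) (use n in \<open>simp add: p_def coeff_monom\<close>)
  qed
  have lc: "lead_coeff p = 1" unfolding dp using n by (simp add: p_def coeff_monom)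
  have roots: "{z. poly p z = 0} = {z. z ^ n = 1}" by (auto simp: p_def poly_monom)
  have rsq: "rsquarefree p"
    unfolding rsquarefree_roots
  proof (intro allI notI)
    fix a assume "poly p a = 0 \<and> poly (pderiv p) a = 0"
    hence "a ^ n = 1" "of_nat n * a ^ (n - 1) = 0"
      by (auto simp: p_def pderiv_diff pderiv_monom poly_monom)
    thus False using n by (metis power_0_left of_nat_eq_0_iff mult_eq_0_iff neq0_conv power_eq_0_iff zero_neq_one)
  qed
  have "Polynomial.smult (lead_coeff p) (\<Prod>z|poly p z = 0. [:-z, 1:]) = p"
    by (rule complex_poly_decompose_rsquarefree[OF rsq])
  thus ?thesis using lc roots by (simp add: p_def)
qed

lemma cyc_prod:
  assumes n: "n > 0"
  shows "Polynomial.monom 1 n - 1 = (\<Prod>d\<in>{d. d dvd n}. cyc d)"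
proof -
  have fin: "finite {d. d dvd n}" using n by simp
  have "Polynomial.monom 1 n - 1 = (\<Prod>z\<in>(\<Union>d\<in>{d. d dvd n}. prim d). [:-z, 1:])"
    using xn_decomp[OF n] roots_union[OF n] by simp
  also have "\<dots> = (\<Prod>d\<in>{d. d dvd n}. cyc d)"
    unfolding cyc_def using fin finite_prim prim_disjoint
    by (subst prod.UNION_disjoint) auto
  finally show ?thesis .
qed

lemma card_prim_sum:
  assumes n: "n > 0"
  shows "(\<Sum>d\<in>{d. d dvd n}. card (prim d)) = n"
proof -
  have fin: "finite {d. d dvd n}" using n by simp
  have "n = card {z::complex. z ^ n = 1}" using card_roots_unity_eq[OF n] by simp
  also have "\<dots> = card (\<Union>d\<in>{d. d dvd n}. prim d)" using roots_union[OF n] by simp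
  also have "\<dots> = (\<Sum>d\<in>{d. d dvd n}. card (prim d))"
    using fin finite_prim prim_disjoint by (subst card_UN_disjoint) auto
  finally show ?thesis by simp
qed

lemma card_prim: "n > 0 \<Longrightarrow> card (prim n) = totient n"
proof (induction n rule: less_induct)
  case (less n)
  define D where "D = {d. d dvd n \<and> d \<noteq> n}"
  have fin: "finite D" using less.prems by (auto simp: D_def)
  have eqD: "{d. d dvd n} = insert n D" by (auto simp: D_def)
  have IH: "(\<Sum>d\<in>D. card (prim d)) = (\<Sum>d\<in>D. totient d)"
  proof (rule sum.cong[OF refl])
    fix d assume "d \<in> D"
    hence "d dvd n" "d \<noteq> n" by (auto simp: D_def)
    hence "d < n" "d > 0" using less.prems dvd_imp_le[of d n] by (auto intro: Nat.gr0I)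
    thus "card (prim d) = totient d" using less.IH by blast
  qed
  have "card (prim n) + (\<Sum>d\<in>D. card (prim d)) = n"
    using card_prim_sum[OF less.prems] fin unfolding eqD by (simp add: D_def)
  moreover have "totient n + (\<Sum>d\<in>D. totient d) = n"
    using totient_divisor_sum[of n] fin unfolding eqD by (simp add: D_def)
  ultimately show ?case using IH by linarith
qed

lemma cyc_monic: "lead_coeff (cyc d) = 1"
  unfolding cyc_def by (simp add: lead_coeff_prod)

lemma degree_cyc: "degree (cyc d) = card (prim d)"
  unfolding cyc_def by (subst degree_prod_sum_eq) auto

lemma cyc_int: "n > 0 \<Longrightarrow> \<exists>F. map_poly of_int F = cyc n"
proof (induction n rule: less_induct)
  case (less n)
  define D where "D = {d. d dvd n \<and> d \<noteq> n}"
  have fin: "finite D" using less.prems by (auto simp: D_def)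
  have eqD: "{d. d dvd n} = insert n D" by (auto simp: D_def)
  have "\<forall>d\<in>D. \<exists>F. map_poly of_int F = cyc d"
  proof
    fix d assume "d \<in> D"
    hence "d dvd n" "d \<noteq> n" by (auto simp: D_def)
    hence "d < n" "d > 0" using less.prems dvd_imp_le[of d n] by (auto intro: Nat.gr0I)
    thus "\<exists>F. map_poly of_int F = cyc d" using less.IH by blast
  qed
  then obtain Fs where Fs: "\<And>d. d \<in> D \<Longrightarrow> map_poly of_int (Fs d) = cyc d" by metis
  define G where "G = (\<Prod>d\<in>D. Fs d)"
  have mG: "map_poly of_int G = (\<Prod>d\<in>D. cyc d)"
    unfolding G_def map_poly_of_int_prod by (rule prod.cong) (auto simp: Fs)
  have "lead_coeff (map_poly (of_int :: int \<Rightarrow> complex) G) = 1"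
    unfolding mG by (simp add: lead_coeff_prod cyc_monic)
  hence lcG: "lead_coeff G = 1" by (simp add: degree_map_poly_of_int coeff_map_poly)
  have "map_poly of_int (Polynomial.monom 1 n - 1 :: int poly) = (Polynomial.monom 1 n - 1 :: complex poly)"
    by (simp add: map_poly_of_int_diff map_poly_of_int_monom)
  also have "\<dots> = cyc n * map_poly of_int G"
    using cyc_prod[OF less.prems] fin unfolding eqD mG by (simp add: D_def)
  finally show ?case by (rule int_quotient[OF lcG])
qed

definition icyc :: "nat \<Rightarrow> int poly" where
  "icyc n = (SOME F. map_poly of_int F = cyc n)"

lemma icyc: "n > 0 \<Longrightarrow> map_poly of_int (icyc n) = cyc n"
  unfolding icyc_def using cyc_int by (rule someI_ex)

lemma degree_icyc: "n > 0 \<Longrightarrow> degree (icyc n) = totient n"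
  using degree_map_poly_of_int[of "icyc n", where 'a=complex] icyc[of n] degree_cyc[of n] card_prim[of n]
  by simp

lemma icyc_prod:
  assumes n: "n > 0"
  shows "Polynomial.monom 1 n - 1 = (\<Prod>d\<in>{d. d dvd n}. icyc d)"
proof -
  have "map_poly (of_int :: int \<Rightarrow> complex) (\<Prod>d\<in>{d. d dvd n}. icyc d) = (\<Prod>d\<in>{d. d dvd n}. cyc d)"
    unfolding map_poly_of_int_prod
    by (rule prod.cong) (use n in \<open>auto intro: icyc dvd_pos_nat\<close>)
  also have "\<dots> = map_poly of_int (Polynomial.monom 1 n - 1)"
    using cyc_prod[OF n] by (simp add: map_poly_of_int_diff map_poly_of_int_monom)
  finally show ?thesis unfolding map_poly_of_int_eq_iff by simp
qed

definition hmg :: "int poly \<Rightarrow> int poly \<Rightarrow> int poly \<Rightarrow> int poly" where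
  "hmg F P Q = (\<Sum>i\<le>degree F. Polynomial.smult (Polynomial.coeff F i) (P ^ i * Q ^ (degree F - i)))"

lemma degree_hmg: "degree (hmg F P Q) \<le> degree F * max (degree P) (degree Q)"
  unfolding hmg_def
proof (rule degree_sum_le)
  fix i assume i: "i \<in> {..degree F}"
  have "degree (Polynomial.smult (Polynomial.coeff F i) (P ^ i * Q ^ (degree F - i))) \<le> degree (P ^ i * Q ^ (degree F - i))"
    by (rule degree_smult_le)
  also have "\<dots> \<le> degree (P ^ i) + degree (Q ^ (degree F - i))" by (rule degree_mult_le)
  also have "\<dots> \<le> degree P * i + degree Q * (degree F - i)"
    using degree_power_le[of P i] degree_power_le[of Q "degree F - i"] by linarith
  also have "\<dots> \<le> max (degree P) (degree Q) * i + max (degree P) (degree Q) * (degree F - i)"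
    by (intro add_mono mult_right_mono) auto
  also have "\<dots> = degree F * max (degree P) (degree Q)"
    using i by (simp add: algebra_simps flip: distrib_left)
  finally show "degree (Polynomial.smult (Polynomial.coeff F i) (P ^ i * Q ^ (degree F - i))) \<le> degree F * max (degree P) (degree Q)" .
qed simp

lemma to_fract_of_nat: "to_fract (of_nat n :: int poly) = (of_nat n :: int poly fract)"
  by (induction n) (simp_all only: of_nat_Suc to_fract_add to_fract_1 of_nat_0 to_fract_0)

lemma to_fract_power: "to_fract (x ^ n) = to_fract x ^ n"
  by (induction n) simp_all

lemma to_fract_of_int: "to_fract (of_int c :: int poly) = (of_int c :: int poly fract)"
proof (induction c rule: int_of_nat_induct)
  case (nonneg n) thus ?case using to_fract_of_nat[of n] by simp
next
  case (neg n)
  have "to_fract (- of_nat (Suc n) :: int poly) = - of_nat (Suc n)"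
    using to_fract_of_nat[of "Suc n"] by simp
  thus ?case by simp
qed

lemma smult_of_int: "Polynomial.smult c X = (of_int c :: int poly) * X"
  by (simp add: of_int_poly)

lemma hmg_fract:
  assumes Q: "Q \<noteq> 0"
  shows "to_fract (hmg F P Q) =
    poly (map_poly (of_int :: int \<Rightarrow> int poly fract) F) (to_fract P / to_fract Q) * to_fract Q ^ degree F"
proof -
  let ?x = "to_fract P / to_fract Q"
  have Q': "to_fract Q \<noteq> 0" using Q by simp
  have "poly (map_poly (of_int :: int \<Rightarrow> int poly fract) F) ?x * to_fract Q ^ degree F =
        (\<Sum>i\<le>degree F. of_int (Polynomial.coeff F i) * ?x ^ i) * to_fract Q ^ degree F"
    by (simp add: poly_altdef degree_map_poly_of_int coeff_map_poly)
  also have "\<dots> = (\<Sum>i\<le>degree F. of_int (Polynomial.coeff F i) * (?x ^ i * to_fract Q ^ degree F))"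
    by (subst sum_distrib_right) (simp add: mult.assoc)
  also have "\<dots> = (\<Sum>i\<le>degree F. of_int (Polynomial.coeff F i) * (to_fract P ^ i * to_fract Q ^ (degree F - i)))"
  proof (rule sum.cong[OF refl])
    fix i assume "i \<in> {..degree F}"
    hence "degree F = i + (degree F - i)" by simp
    hence "to_fract Q ^ degree F = to_fract Q ^ i * to_fract Q ^ (degree F - i)"
      by (metis power_add)
    thus "of_int (Polynomial.coeff F i) * (?x ^ i * to_fract Q ^ degree F) =
          of_int (Polynomial.coeff F i) * (to_fract P ^ i * to_fract Q ^ (degree F - i))"
      using Q' by (simp add: power_divide)
  qed
  also have "\<dots> = to_fract (hmg F P Q)"
    unfolding hmg_def to_fract_sum
    by (rule sum.cong[OF refl]) (simp add: smult_of_int to_fract_of_int to_fract_power)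
  finally show ?thesis by simp
qed

lemma to_fract_prod: "to_fract (prod f A) = (\<Prod>x\<in>A. to_fract (f x))"
  by (induction A rule: infinite_finite_induct) simp_all

lemma hmg_prod:
  assumes n: "n > 0" and Q: "Q \<noteq> 0"
  shows "P ^ n - Q ^ n = (\<Prod>d\<in>{d. d dvd n}. hmg (icyc d) P Q)"
proof -
  let ?x = "to_fract P / to_fract Q"
  let ?m = "map_poly (of_int :: int \<Rightarrow> int poly fract)"
  have fin: "finite {d. d dvd n}" using n by simp
  have Q': "to_fract Q \<noteq> 0" using Q by simp
  have dsum: "(\<Sum>d\<in>{d. d dvd n}. degree (icyc d)) = n"
  proof -
    have "(\<Sum>d\<in>{d. d dvd n}. degree (icyc d)) = (\<Sum>d\<in>{d. d dvd n}. totient d)"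
      by (rule sum.cong[OF refl]) (auto intro: degree_icyc dvd_pos_nat[OF n])
    thus ?thesis using totient_divisor_sum[of n] by simp
  qed
  have "to_fract (\<Prod>d\<in>{d. d dvd n}. hmg (icyc d) P Q) =
        (\<Prod>d\<in>{d. d dvd n}. poly (?m (icyc d)) ?x * to_fract Q ^ degree (icyc d))"
    unfolding to_fract_prod by (rule prod.cong[OF refl]) (rule hmg_fract[OF Q])
  also have "\<dots> = (\<Prod>d\<in>{d. d dvd n}. poly (?m (icyc d)) ?x) * (\<Prod>d\<in>{d. d dvd n}. to_fract Q ^ degree (icyc d))"
    by (rule prod.distrib)
  also have "(\<Prod>d\<in>{d. d dvd n}. poly (?m (icyc d)) ?x) = poly (?m (\<Prod>d\<in>{d. d dvd n}. icyc d)) ?x"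
    by (simp only: map_poly_of_int_prod poly_prod)
  also have "(\<Prod>d\<in>{d. d dvd n}. to_fract Q ^ degree (icyc d)) = to_fract Q ^ n"
    using power_sum[of "to_fract Q" "\<lambda>d. degree (icyc d)" "{d. d dvd n}"] dsum by simp
  also have "poly (?m (\<Prod>d\<in>{d. d dvd n}. icyc d)) ?x = ?x ^ n - 1"
    unfolding icyc_prod[OF n, symmetric] map_poly_of_int_diff map_poly_of_int_monom
    by (simp add: poly_monom)
  also have "(?x ^ n - 1) * to_fract Q ^ n = ?x ^ n * to_fract Q ^ n - to_fract Q ^ n"
    by (simp only: left_diff_distrib mult_1_left)
  also have "?x ^ n * to_fract Q ^ n = to_fract P ^ n"
    using Q' by (simp add: power_divide)
  also have "to_fract P ^ n - to_fract Q ^ n = to_fract (P ^ n - Q ^ n)"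
    by (simp add: to_fract_power)
  finally have "to_fract (\<Prod>d\<in>{d. d dvd n}. hmg (icyc d) P Q) = to_fract (P ^ n - Q ^ n)" .
  thus ?thesis unfolding to_fract_eq_iff by simp
qed

lemma prime_elem_dvd_prodE:
  assumes "prime_elem (p :: 'a :: comm_semiring_1_cancel)" "p dvd prod f A" "finite A"
  shows "\<exists>x\<in>A. p dvd f x"
  using assms(3,2)
proof (induction A rule: finite_induct)
  case empty thus ?case using assms(1) by (simp add: prime_elem_def)
next
  case (insert a A)
  thus ?case using assms(1) by (auto simp: prime_elem_dvd_mult_iff)
qed

lemma key:
  fixes P Q q :: "int poly"
  assumes n: "n > 0" and Q: "Q \<noteq> 0" and ne: "P ^ n \<noteq> Q ^ n"
    and irr: "irreducible q" and dv: "q dvd P ^ n - Q ^ n"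
  shows "degree q \<le> totient n * max (degree P) (degree Q)"
proof -
  have pr: "prime_elem q" using irr by (simp add: prime_elem_iff_irreducible)
  have fin: "finite {d. d dvd n}" using n by simp
  from prime_elem_dvd_prodE[OF pr dv[unfolded hmg_prod[OF n Q]] fin]
  obtain d where d: "d dvd n" "q dvd hmg (icyc d) P Q" by auto
  have "hmg (icyc d) P Q \<noteq> 0"
  proof
    assume "hmg (icyc d) P Q = 0"
    hence "(\<Prod>d\<in>{d. d dvd n}. hmg (icyc d) P Q) = 0" using d(1) fin
      by (intro prod_zero) auto
    thus False using ne hmg_prod[OF n Q, of P] by simp
  qed
  hence "degree q \<le> degree (hmg (icyc d) P Q)" using d(2) by (rule dvd_imp_degree_le[rotated])
  also have "\<dots> \<le> degree (icyc d) * max (degree P) (degree Q)" by (rule degree_hmg)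
  also have "degree (icyc d) = totient d" using d(1) n by (intro degree_icyc) (auto intro: dvd_pos_nat)
  also have "totient d \<le> totient n" using d(1) n by (intro totient_dvd_mono) auto
  finally show ?thesis by (simp add: mult_right_mono)
qed

lemma coeff_const': "Polynomial.coeff [:a:] i = (if i = 0 then a else 0)"
  by (cases i) simp_all

lemma pcompose_power': "pcompose (p ^ m) g = (pcompose p g) ^ m"
  by (induction m) (simp_all add: pcompose_1 pcompose_mult)

lemma pcompose_monom': "pcompose (Polynomial.monom c m) g = Polynomial.smult c (g ^ m)"
proof -
  have "pcompose [:0, 1:] g = g" by (simp add: pcompose_pCons)
  thus ?thesis by (simp add: monom_altdef pcompose_smult pcompose_power')
qed

lemma degree_eqI': "Polynomial.coeff p n \<noteq> 0 \<Longrightarrow> (\<And>i. i > n \<Longrightarrow> Polynomial.coeff p i = 0) \<Longrightarrow> degree p = n"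
  by (rule antisym) (auto intro: degree_le le_degree)

lemma irr_dvd_smult:
  fixes q H :: "int poly"
  assumes "irreducible q" "q dvd Polynomial.smult c H" "c \<noteq> 0"
  shows "degree q = 0 \<or> q dvd H"
proof -
  have pr: "prime_elem q" using assms(1) by (simp add: prime_elem_iff_irreducible)
  have "Polynomial.smult c H = [:c:] * H" by simp
  hence "q dvd [:c:] * H" using assms(2) by simp
  hence "q dvd [:c:] \<or> q dvd H" using pr prime_elem_dvd_mult_iff by blast
  thus ?thesis
  proof
    assume "q dvd [:c:]"
    hence "degree q \<le> degree [:c:]" using assms(3) by (intro dvd_imp_degree_le) auto
    thus ?thesis by simp
  qed simp
qed

lemma part1:
  fixes k :: nat and a b :: int
  assumes k: "k \<ge> 2" and b: "b \<noteq> 0"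
  shows "admits_polysmoothness (Polynomial.monom 1 k + Polynomial.monom a (k - 1) - [:b:])
              (real (totient (k - 1)) / real (k - 1))"
proof -
  define m where "m = k - 1"
  have km: "k = Suc m" and m: "m \<ge> 1" using k by (auto simp: m_def)
  define f :: "int poly" where "f = Polynomial.monom 1 k + Polynomial.monom a (k - 1) - [:b:]"
  define g :: "int poly" where "g = Polynomial.monom b m - [:a:]"
  define X :: "int poly" where "X = [:0, 1:]"
  have df: "degree f = k"
    by (rule degree_eqI') (use k in \<open>auto simp: f_def coeff_monom coeff_const'\<close>)
  have dg: "degree g = m"
    by (rule degree_eqI') (use m b in \<open>auto simp: g_def coeff_monom coeff_const'\<close>)
  have g0: "g \<noteq> 0" using dg m by auto
  have dP: "degree (g * X) = k" using g0 by (simp add: degree_mult_eq X_def dg km)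
  have comp: "pcompose f g = Polynomial.smult b ((g * X) ^ m - 1)"
  proof -
    have "pcompose f g = g ^ k + Polynomial.smult a (g ^ m) - [:b:]"
      by (simp add: f_def pcompose_add pcompose_diff pcompose_monom' m_def)
    also have "g ^ k + Polynomial.smult a (g ^ m) = (g + [:a:]) * g ^ m"
      by (simp add: km algebra_simps)
    also have "g + [:a:] = Polynomial.smult b (X ^ m)"
      by (simp add: g_def X_def monom_altdef)
    also have "Polynomial.smult b (X ^ m) * g ^ m - [:b:] = Polynomial.smult b ((g * X) ^ m - 1)"
      by (simp add: power_mult_distrib algebra_simps smult_diff_right)
    finally show ?thesis .
  qed
  have A1: "degree f > 0" using df k by simp
  have A2: "degree g > 0" using dg m by simp
  have A3: "\<forall>q. irreducible q \<and> q dvd pcompose f g \<longrightarrow> real (degree q) \<le> real (totient m) / real m * real (degree f) * real (degree g)"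
  proof (intro allI impI)
    fix q :: "int poly" assume q: "irreducible q \<and> q dvd pcompose f g"
    have bound: "degree q \<le> totient m * k"
    proof -
      from irr_dvd_smult[of q b] q b comp
      have "degree q = 0 \<or> q dvd (g * X) ^ m - 1 ^ m" by auto
      thus ?thesis
      proof
        assume dv: "q dvd (g * X) ^ m - 1 ^ m"
        have ne: "(g * X) ^ m \<noteq> 1 ^ m"
        proof
          assume "(g * X) ^ m = 1 ^ m"
          hence "degree ((g * X) ^ m) = 0" by simp
          thus False using dP m by (simp add: degree_power_eq g0 X_def) 
        qed
        have m0: "m > 0" using m by simp
        have "degree q \<le> totient m * max (degree (g * X)) (degree (1::int poly))"
          using key[OF m0 _ ne _ dv] q by simp
        thus ?thesis using dP by simp
      qed simp
    qed
    have "real (degree q) \<le> real (totient m) * real k" using bound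
      by (metis of_nat_le_iff of_nat_mult)
    also have "\<dots> = real (totient m) / real m * real (degree f) * real (degree g)"
      using m by (simp add: df dg field_simps)
    finally show "real (degree q) \<le> real (totient m) / real m * real (degree f) * real (degree g)" .
  qed
  have "admits_polysmoothness f (real (totient m) / real m)"
    unfolding admits_polysmoothness_def using A1 A2 A3 by blast
  thus ?thesis unfolding f_def m_def .
qed

lemma part2:
  fixes k :: nat and a b :: int
  assumes k: "k \<ge> 2" and ab: "a * b \<noteq> 0"
  shows "admits_polysmoothness (Polynomial.monom a k - Polynomial.monom 1 1 + [:b:])
              (real (totient k) / real k)"
proof -
  have a: "a \<noteq> 0" and b: "b \<noteq> 0" using ab by auto
  define f :: "int poly" where "f = Polynomial.monom a k - Polynomial.monom 1 1 + [:b:]"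
  define g :: "int poly" where "g = Polynomial.monom a k + [:b:]"
  define X :: "int poly" where "X = [:0, 1:]"
  have df: "degree f = k"
    by (rule degree_eqI') (use k a in \<open>auto simp: f_def coeff_monom coeff_const'\<close>)
  have dg: "degree g = k"
    by (rule degree_eqI') (use k a in \<open>auto simp: g_def coeff_monom coeff_const'\<close>)
  have g0: "g \<noteq> 0" using dg k by auto
  have X0: "X \<noteq> 0" by (simp add: X_def)
  have dX: "degree X = 1" by (simp add: X_def)
  have comp: "pcompose f g = Polynomial.smult a (g ^ k - X ^ k)"
  proof -
    have "pcompose f g = Polynomial.smult a (g ^ k) - g + [:b:]"
      by (simp add: f_def pcompose_add pcompose_diff pcompose_monom')
    also have "g = Polynomial.smult a (X ^ k) + [:b:]"
      by (simp add: g_def X_def monom_altdef)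
    also have "Polynomial.smult a ((Polynomial.smult a (X ^ k) + [:b:]) ^ k) - (Polynomial.smult a (X ^ k) + [:b:]) + [:b:]
        = Polynomial.smult a ((Polynomial.smult a (X ^ k) + [:b:]) ^ k - X ^ k)"
      by (simp add: smult_diff_right)
    finally show ?thesis by (simp add: g_def X_def monom_altdef)
  qed
  have A1: "degree f > 0" using df k by simp
  have A2: "degree g > 0" using dg k by simp
  have A3: "\<forall>q. irreducible q \<and> q dvd pcompose f g \<longrightarrow> real (degree q) \<le> real (totient k) / real k * real (degree f) * real (degree g)"
  proof (intro allI impI)
    fix q :: "int poly" assume q: "irreducible q \<and> q dvd pcompose f g"
    have bound: "degree q \<le> totient k * k"
    proof -
      from irr_dvd_smult[of q a] q a comp
      have "degree q = 0 \<or> q dvd g ^ k - X ^ k" by auto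
      thus ?thesis
      proof
        assume dv: "q dvd g ^ k - X ^ k"
        have ne: "g ^ k \<noteq> X ^ k"
        proof
          assume "g ^ k = X ^ k"
          hence "degree (g ^ k) = degree (X ^ k)" by simp
          hence "k * k = k" using g0 X0 by (simp add: degree_power_eq dg dX)
          thus False using k mult_le_mono1[of 2 k k] by linarith
        qed
        have k0: "k > 0" using k by simp
        have "degree q \<le> totient k * max (degree g) (degree X)"
          using key[OF k0 X0 ne _ dv] q by simp
        thus ?thesis using dg dX k by simp
      qed simp
    qed
    have "real (degree q) \<le> real (totient k) * real k" using bound
      by (metis of_nat_le_iff of_nat_mult)
    also have "\<dots> = real (totient k) / real k * real (degree f) * real (degree g)"
      using k by (simp add: df dg field_simps)
    finally show "real (degree q) \<le> real (totient k) / real k * real (degree f) * real (degree g)" .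
  qed
  have "admits_polysmoothness f (real (totient k) / real k)"
    unfolding admits_polysmoothness_def using A1 A2 A3 by blast
  thus ?thesis unfolding f_def .
qed

theorem theorem1p5:
  fixes k :: nat
  assumes "k \<ge> 2"
  shows "(\<forall>a b :: int. b \<noteq> 0 \<longrightarrow>
            admits_polysmoothness (Polynomial.monom 1 k + Polynomial.monom a (k - 1) - [:b:])
              (real (totient (k - 1)) / real (k - 1)))
       \<and> (\<forall>a b :: int. a * b \<noteq> 0 \<longrightarrow>
            admits_polysmoothness (Polynomial.monom a k - Polynomial.monom 1 1 + [:b:])
              (real (totient k) / real k))"
  using part1[OF assms] part2[OF assms] by blast

end
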